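(* Let $\Gamma$ be a finite graph on $n$ vertices such that $\operatorname{Aut}(\Gamma)$ acts transitively and imprimitively on $V(\Gamma)$. If $\operatorname{Aut}(\Gamma)$ has a factorizing block system, then $\Gamma$ is uniformly vertex-transitive.
   Context: A permutation of a finite set $X$ with $|X|=n$ is identified with its $n\times n$ permutation matrix (the $(u,v)$ entry is $1$ iff $\sigma(u)=v$); $J_n$ is the all-ones matrix. A group $G$ acting on $X$ is uniformly transitive if there are $n$ distinct elements $\sigma_1,\ldots,\sigma_n\in G$ whose permutation matrices satisfy $\sum_i\sigma_i=J_n$; $\Gamma$ is uniformly vertex-transitive if $\operatorname{Aut}(\Gamma)$ is uniformly transitive on $V(\Gamma)$. For $G$ transitive on $X$, a block is $B\subset X$ with $gB=B$ or $gB\cap B=\emptyset$ for all $g\in G$; it is nontrivial if $1<|B|<|X|$; $G$ is imprimitive if a nontrivial block exists. A block system is $\mathcal B=\{gB:g\in G\}$ for a block $B$; it partitions $X$ into blocks of equal size. The fixer $\mathrm{fix}_\Gamma(\mathcal B)$ is the subgroup of $\operatorname{Aut}(\Gamma)$ of automorphisms mapping each block of $\mathcal B$ to itself; the quotient $\operatorname{Aut}(\Gamma)/\mathrm{fix}_\Gamma(\mathcal B)$ acts faithfully and transitively on $\mathcal B$. A nontrivial block system $\mathcal B$ for $\operatorname{Aut}(\Gamma)$, consisting of $m$ blocks of size $k$, is factorizing if (i) $\mathrm{fix}_\Gamma(\mathcal B)$ contains $k$ distinct elements whose permutation matrices (on $V(\Gamma)$) are pairwise orthogonal for the Schur (entrywise)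 product, i.e. pairwise have zero entrywise product, and (ii) $\operatorname{Aut}(\Gamma)/\mathrm{fix}_\Gamma(\mathcal B)$ acts uniformly transitively on $\mathcal B$. *)

theory Defs
  imports "HOL-Combinatorics.Permutations"
begin

text \<open>Permutations of a set X are functions
  that permute X (identity outside X); a permutation is identified with its
  permutation matrix, so distinct permutations are distinct matrices.\<close>

definition simple_graph :: "'a set \<Rightarrow> ('a \<Rightarrow> 'a \<Rightarrow> bool) \<Rightarrow> bool" where
  "simple_graph V E \<longleftrightarrow> finite V \<and> (\<forall>u\<in>V. \<forall>v\<in>V. E u v \<longleftrightarrow> E v u) \<and> (\<forall>u\<in>V. \<not> E u u)"

definition Aut :: "'a set \<Rightarrow> ('a \<Rightarrow> 'a \<Rightarrow> bool) \<Rightarrow> ('a \<Rightarrow> 'a) set" where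
  "Aut V E = {\<sigma>. \<sigma> permutes V \<and> (\<forall>u\<in>V. \<forall>v\<in>V. E u v \<longleftrightarrow> E (\<sigma> u) (\<sigma> v))}"

text \<open>G uniformly transitive on X: there are |X| distinct elements of G whose
  permutation matrices sum to the all-ones matrix J, i.e. for all u, v in X
  exactly one of them maps u to v.\<close>
definition uniformly_transitive :: "('b \<Rightarrow> 'b) set \<Rightarrow> 'b set \<Rightarrow> bool" where
  "uniformly_transitive G X \<longleftrightarrow>
     (\<exists>S\<subseteq>G. card S = card X \<and> (\<forall>u\<in>X. \<forall>v\<in>X. \<exists>!\<sigma>\<in>S. \<sigma> u = v))"

definition uniformly_vertex_transitive :: "'a set \<Rightarrow> ('a \<Rightarrow> 'a \<Rightarrow> bool) \<Rightarrow> bool" where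
  "uniformly_vertex_transitive V E \<longleftrightarrow> uniformly_transitive (Aut V E) V"

definition transitive_on :: "('b \<Rightarrow> 'b) set \<Rightarrow> 'b set \<Rightarrow> bool" where
  "transitive_on G X \<longleftrightarrow> (\<forall>u\<in>X. \<forall>v\<in>X. \<exists>g\<in>G. g u = v)"

definition is_block :: "('b \<Rightarrow> 'b) set \<Rightarrow> 'b set \<Rightarrow> 'b set \<Rightarrow> bool" where
  "is_block G X B \<longleftrightarrow> B \<subseteq> X \<and> (\<forall>g\<in>G. g ` B = B \<or> g ` B \<inter> B = {})"

definition nontrivial_block :: "('b \<Rightarrow> 'b) set \<Rightarrow> 'b set \<Rightarrow> 'b set \<Rightarrow> bool" where
  "nontrivial_block G X B \<longleftrightarrow> is_block G X B \<and> 1 < card B \<and> card B < card X"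

definition imprimitive :: "('b \<Rightarrow> 'b) set \<Rightarrow> 'b set \<Rightarrow> bool" where
  "imprimitive G X \<longleftrightarrow> (\<exists>B. nontrivial_block G X B)"

definition block_system :: "('b \<Rightarrow> 'b) set \<Rightarrow> 'b set \<Rightarrow> 'b set set" where
  "block_system G B = (\<lambda>g. g ` B) ` G"

definition fixer :: "'a set \<Rightarrow> ('a \<Rightarrow> 'a \<Rightarrow> bool) \<Rightarrow> 'a set set \<Rightarrow> ('a \<Rightarrow> 'a) set" where
  "fixer V E \<B> = {g \<in> Aut V E. \<forall>C\<in>\<B>. g ` C = C}"

text \<open>The quotient
  Aut/fixer acts faithfully on the blocks, so its elements are identified with
  these induced permutations (distinct cosets = distinct induced permutations).\<close>
definition induced_perm :: "'a set set \<Rightarrow> ('a \<Rightarrow> 'a) \<Rightarrow> 'a set \<Rightarrow> 'a set" where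
  "induced_perm \<B> g = (\<lambda>C. if C \<in> \<B> then g ` C else C)"

definition factorizing :: "'a set \<Rightarrow> ('a \<Rightarrow> 'a \<Rightarrow> bool) \<Rightarrow> 'a set set \<Rightarrow> bool" where
  "factorizing V E \<B> \<longleftrightarrow>
     (\<exists>B. nontrivial_block (Aut V E) V B \<and> \<B> = block_system (Aut V E) B \<and>
        (\<exists>S\<subseteq>fixer V E \<B>. card S = card B \<and>
            (\<forall>\<sigma>\<in>S. \<forall>\<tau>\<in>S. \<sigma> \<noteq> \<tau> \<longrightarrow> (\<forall>u\<in>V. \<sigma> u \<noteq> \<tau> u))) \<and>
        uniformly_transitive (induced_perm \<B> ` Aut V E) \<B>)"

end

theory Submission
  imports Defs
begin

lemma aut_comp:
  assumes "\<sigma> \<in> Aut V E" "\<tau> \<in> Aut V E" shows "\<sigma> \<circ> \<tau> \<in> Aut V E"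
proof -
  have p: "\<sigma> permutes V" "\<tau> permutes V" using assms by (auto simp: Aut_def)
  have "\<forall>u\<in>V. \<forall>v\<in>V. E u v \<longleftrightarrow> E (\<sigma> (\<tau> u)) (\<sigma> (\<tau> v))"
  proof (intro ballI)
    fix u v assume uv: "u \<in> V" "v \<in> V"
    then have "\<tau> u \<in> V" "\<tau> v \<in> V" using p(2) by (auto simp: permutes_in_image)
    then show "E u v \<longleftrightarrow> E (\<sigma> (\<tau> u)) (\<sigma> (\<tau> v))" using assms uv by (auto simp: Aut_def)
  qed
  then show ?thesis using p permutes_compose[OF p(2) p(1)] by (auto simp: Aut_def)
qed

lemma aut_inv:
  assumes "\<sigma> \<in> Aut V E" shows "inv \<sigma> \<in> Aut V E"
proof -
  have p: "\<sigma> permutes V" using assms by (auto simp: Aut_def)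
  have "\<forall>u\<in>V. \<forall>v\<in>V. E u v \<longleftrightarrow> E (inv \<sigma> u) (inv \<sigma> v)"
  proof (intro ballI)
    fix u v assume uv: "u \<in> V" "v \<in> V"
    then have i: "inv \<sigma> u \<in> V" "inv \<sigma> v \<in> V" using permutes_inv[OF p] by (auto simp: permutes_in_image)
    have "E (inv \<sigma> u) (inv \<sigma> v) \<longleftrightarrow> E (\<sigma> (inv \<sigma> u)) (\<sigma> (inv \<sigma> v))"
      using assms i by (auto simp: Aut_def)
    also have "\<dots> \<longleftrightarrow> E u v" using permutes_inverses(1)[OF p] by simp
    finally show "E u v \<longleftrightarrow> E (inv \<sigma> u) (inv \<sigma> v)" by simp
  qed
  then show ?thesis using permutes_inv[OF p] by (auto simp: Aut_def)
qed

lemma block_eq: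
  assumes "is_block (Aut V E) V B" "g \<in> Aut V E" "h \<in> Aut V E" "x \<in> g ` B" "x \<in> h ` B"
  shows "g ` B = h ` B"
proof -
  have ph: "h permutes V" using assms by (auto simp: Aut_def)
  define k where "k = inv h \<circ> g"
  have k: "k \<in> Aut V E" unfolding k_def by (rule aut_comp[OF aut_inv[OF assms(3)] assms(2)])
  have hk: "h \<circ> k = g" unfolding k_def using permutes_inverses(1)[OF ph] by (auto simp: fun_eq_iff)
  have "inv h x \<in> k ` B" using assms(4) unfolding k_def by auto
  moreover have "inv h x \<in> B" using assms(5) permutes_inverses(2)[OF ph] by auto
  ultimately have "k ` B = B" using assms(1) k unfolding is_block_def by blast
  then have "h ` k ` B = h ` B" by simp
  then show ?thesis using hk by (simp add: image_comp)
qed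

lemma ex1_uniq: "\<exists>!x. P x \<Longrightarrow> P a \<Longrightarrow> P b \<Longrightarrow> a = b"
  by auto

theorem mainTheorem9:
  fixes V :: "'a set" and E :: "'a \<Rightarrow> 'a \<Rightarrow> bool"
  assumes "simple_graph V E"
    and "transitive_on (Aut V E) V"
    and "imprimitive (Aut V E) V"
    and "\<exists>\<B>. factorizing V E \<B>"
  shows "uniformly_vertex_transitive V E"
proof -
  let ?G = "Aut V E"
  obtain \<B> where f: "factorizing V E \<B>" using assms(4) by blast
  then obtain B S where nb: "nontrivial_block ?G V B" and BB: "\<B> = block_system ?G B"
    and S: "S \<subseteq> fixer V E \<B>" "card S = card B"
       "\<forall>\<sigma>\<in>S. \<forall>\<tau>\<in>S. \<sigma> \<noteq> \<tau> \<longrightarrow> (\<forall>u\<in>V. \<sigma> u \<noteq> \<tau> u)"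
    and ut: "uniformly_transitive (induced_perm \<B> ` ?G) \<B>"
    unfolding factorizing_def by blast
  obtain T where T: "T \<subseteq> induced_perm \<B> ` ?G" "card T = card \<B>" "\<forall>C\<in>\<B>. \<forall>D\<in>\<B>. \<exists>!t\<in>T. t C = D"
    using ut unfolding uniformly_transitive_def by (elim exE conjE) (rule that)
  have blk: "is_block ?G V B" and cB: "1 < card B" using nb by (auto simp: nontrivial_block_def)
  have BV: "B \<subseteq> V" using blk by (auto simp: is_block_def)
  have finV: "finite V" using assms(1) by (auto simp: simple_graph_def)
  have finB: "finite B" using BV finV finite_subset by blast
  obtain b where b: "b \<in> B" using cB by (metis card.empty ex_in_conv not_less_zero)
  have finS: "finite S" using S(2) cB card.infinite by fastforce
  have SG: "\<And>s. s \<in> S \<Longrightarrow> s \<in> ?G" and Sfix: "\<And>s C. s \<in> S \<Longrightarrow> C \<in> \<B> \<Longrightarrow> s ` C = C"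
    using S(1) by (auto simp: fixer_def)
  have inB: "\<And>v. v \<in> V \<Longrightarrow> \<exists>C\<in>\<B>. v \<in> C"
  proof -
    fix v assume "v \<in> V"
    then obtain g where "g \<in> ?G" "g b = v" using assms(2) b BV unfolding transitive_on_def by blast
    then show "\<exists>C\<in>\<B>. v \<in> C" using b unfolding BB block_system_def by blast
  qed
  have beq: "\<And>C D x. C \<in> \<B> \<Longrightarrow> D \<in> \<B> \<Longrightarrow> x \<in> C \<Longrightarrow> x \<in> D \<Longrightarrow> C = D"
  proof -
    fix C D x assume a: "C \<in> \<B>" "D \<in> \<B>" "x \<in> C" "x \<in> D"
    obtain g where g: "g \<in> ?G" "C = g ` B" using a(1) unfolding BB block_system_def by auto
    obtain h where h: "h \<in> ?G" "D = h ` B" using a(2) unfolding BB block_system_def by auto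
    show "C = D" using block_eq[OF blk g(1) h(1)] a g h by simp
  qed
  have gC: "\<And>g C. g \<in> ?G \<Longrightarrow> C \<in> \<B> \<Longrightarrow> g ` C \<in> \<B>"
  proof -
    fix g C assume a: "g \<in> ?G" "C \<in> \<B>"
    obtain h where h: "h \<in> ?G" "C = h ` B" using a(2) unfolding BB block_system_def by auto
    have "g ` C = (g \<circ> h) ` B" using h by (simp add: image_comp)
    moreover have "g \<circ> h \<in> ?G" using aut_comp a(1) h(1) by blast
    ultimately show "g ` C \<in> \<B>" unfolding BB block_system_def by blast
  qed
  have cardC: "\<And>C. C \<in> \<B> \<Longrightarrow> card C = card B \<and> finite C"
  proof -
    fix C assume "C \<in> \<B>"
    then obtain g where g: "g \<in> ?G" "C = g ` B" unfolding BB block_system_def by blast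
    then have "inj g" by (auto simp: Aut_def permutes_inj)
    then show "card C = card B \<and> finite C" using g finB by (simp add: card_image inj_on_subset)
  qed
  have CV: "\<And>C. C \<in> \<B> \<Longrightarrow> C \<subseteq> V"
    unfolding BB block_system_def using BV by (auto simp: Aut_def permutes_in_image)
  define gt where "gt t = (SOME g. g \<in> ?G \<and> induced_perm \<B> g = t)" for t
  have gt: "\<And>t. t \<in> T \<Longrightarrow> gt t \<in> ?G \<and> induced_perm \<B> (gt t) = t"
  proof -
    fix t assume "t \<in> T"
    then have "\<exists>g. g \<in> ?G \<and> induced_perm \<B> g = t" using T(1) by blast
    then show "gt t \<in> ?G \<and> induced_perm \<B> (gt t) = t" unfolding gt_def by (rule someI_ex)
  qed
  have tC: "\<And>t C. t \<in> T \<Longrightarrow> C \<in> \<B> \<Longrightarrow> t C = gt t ` C"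
  proof -
    fix t C assume a: "t \<in> T" "C \<in> \<B>"
    have "t C = induced_perm \<B> (gt t) C" using gt[OF a(1)] by simp
    then show "t C = gt t ` C" using a(2) unfolding induced_perm_def by simp
  qed
  define U where "U = {s \<circ> gt t | s t. s \<in> S \<and> t \<in> T}"
  have UG: "U \<subseteq> ?G" unfolding U_def using SG gt aut_comp by blast
  have key: "\<And>s t u v C D. s \<in> S \<Longrightarrow> t \<in> T \<Longrightarrow> C \<in> \<B> \<Longrightarrow> D \<in> \<B> \<Longrightarrow> u \<in> C \<Longrightarrow> v \<in> D
      \<Longrightarrow> s (gt t u) = v \<Longrightarrow> t C = D"
  proof -
    fix s t u v C D assume a: "s \<in> S" "t \<in> T" "C \<in> \<B>" "D \<in> \<B>" "u \<in> C" "v \<in> D" "s (gt t u) = v"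
    have c: "gt t ` C \<in> \<B>" using gC gt a by blast
    have "v \<in> s ` gt t ` C" using a by auto
    then have "v \<in> gt t ` C" using Sfix[OF a(1) c] by simp
    then have "gt t ` C = D" using beq c a by blast
    then show "t C = D" using tC a by simp
  qed
  have uniq: "\<forall>u\<in>V. \<forall>v\<in>V. \<exists>!\<sigma>\<in>U. \<sigma> u = v"
  proof (intro ballI)
    fix u v assume u: "u \<in> V" and v: "v \<in> V"
    obtain C where C: "C \<in> \<B>" "u \<in> C" using inB u by blast
    obtain D where D: "D \<in> \<B>" "v \<in> D" using inB v by blast
    have ut1: "\<exists>!t. t \<in> T \<and> t C = D" using T(3) C(1) D(1) by simp
    obtain t where t: "t \<in> T" "t C = D" using ex1_implies_ex[OF ut1] by blast
    have gD: "gt t ` C = D" using tC t C by simp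
    have w: "gt t u \<in> D" using gD C by blast
    have wV: "gt t u \<in> V" using w CV D by blast
    have inj: "inj_on (\<lambda>s. s (gt t u)) S" using S(3) wV by (auto simp: inj_on_def)
    have sub: "(\<lambda>s. s (gt t u)) ` S \<subseteq> D" using Sfix[OF _ D(1)] w by blast
    have "card ((\<lambda>s. s (gt t u)) ` S) = card D" using card_image[OF inj] S(2) cardC[OF D(1)] by simp
    then have "(\<lambda>s. s (gt t u)) ` S = D" using card_subset_eq cardC[OF D(1)] sub by blast
    then obtain s where s: "s \<in> S" "s (gt t u) = v" using D by force
    show "\<exists>!\<sigma>\<in>U. \<sigma> u = v"
    proof (rule ex1I[where a="s \<circ> gt t"])
      show "s \<circ> gt t \<in> U \<and> (s \<circ> gt t) u = v" using s t unfolding U_def by auto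
    next
      fix \<sigma> assume "\<sigma> \<in> U \<and> \<sigma> u = v"
      then obtain s' t' where st: "\<sigma> = s' \<circ> gt t'" "s' \<in> S" "t' \<in> T" "s' (gt t' u) = v"
        unfolding U_def by auto
      have "t' C = D" using key[OF st(2,3) C(1) D(1) C(2) D(2) st(4)] .
      then have tt: "t' = t" using ex1_uniq[OF ut1, of t' t] t st(3) by simp
      have "s' (gt t u) = s (gt t u)" using st(4) s(2) tt by simp
      then have "s' = s"
        using S(3) st(2) s(1) wV by blast
      then show "\<sigma> = s \<circ> gt t" using st tt by simp
    qed
  qed
  have u0: "b \<in> V" using b BV by blast
  have bij: "bij_betw (\<lambda>\<sigma>. \<sigma> b) U V"
    unfolding bij_betw_def
  proof
    show "inj_on (\<lambda>\<sigma>. \<sigma> b) U"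
    proof (rule inj_onI)
      fix x y assume xy: "x \<in> U" "y \<in> U" "x b = y b"
      have "x b \<in> V" using xy UG u0 by (auto simp: Aut_def permutes_in_image)
      then have "\<exists>!\<sigma>. \<sigma> \<in> U \<and> \<sigma> b = x b" using uniq u0 by simp
      then show "x = y" using xy ex1_uniq by metis
    qed
    show "(\<lambda>\<sigma>. \<sigma> b) ` U = V"
    proof
      show "(\<lambda>\<sigma>. \<sigma> b) ` U \<subseteq> V" using UG u0 by (auto simp: Aut_def permutes_in_image)
      show "V \<subseteq> (\<lambda>\<sigma>. \<sigma> b) ` U"
      proof
        fix v assume "v \<in> V"
        then have "\<exists>!\<sigma>. \<sigma> \<in> U \<and> \<sigma> b = v" using uniq u0 by simp
        then obtain \<sigma> where "\<sigma> \<in> U" "\<sigma> b = v" using ex1_implies_ex by blast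
        then show "v \<in> (\<lambda>\<sigma>. \<sigma> b) ` U" by blast
      qed
    qed
  qed
  have "card U = card V" using bij_betw_same_card[OF bij] .
  then show ?thesis unfolding uniformly_vertex_transitive_def uniformly_transitive_def
    using UG uniq by (intro exI[of _ U] conjI)
qed

end
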